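(* For any $F\in\mathscr{F}_{\mathrm{AIFV}}$: (i) $\mathcal{P}^1_{F,0}=\mathcal{P}^1_{F,1}=\{0,1\}$; (ii) for any $i\in\{0,1\}$ and $b\in\mathcal{C}$, if $\mathcal{S}_{F,i}(\lambda)=\emptyset$ and $(i,b)\ne(1,0)$, then $\mathcal{P}^1_{F,i}(b)=\{0,1\}$; (iii) for any $i\in\{0,1\}$ and $s\in\mathcal{S}$, if $\bar{\mathcal{P}}^0_{F,i}(f_i(s))\ne\emptyset$, then $\bar{\mathcal{P}}^2_{F,i}(f_i(s))=\{00\}$.
   Context: $\mathcal{S}$ is a finite source alphabet with $|\mathcal{S}|\ge 2$ and $\mathcal{C}=\{0,1\}$; $\mathcal{A}^k,\mathcal{A}^{\ast},\mathcal{A}^{+}$ are sequences of length $k$, finite, positive finite length; $\lambda$ empty sequence; $\preceq$ prefix, $\prec$ proper prefix; $\mathrm{suff}(x_1\cdots x_n)=x_2\cdots x_n$. A code-tuple $F$ with $m\ge1$ code tables consists of maps $f_i:\mathcal{S}\to\mathcal{C}^{\ast}$ and $\tau_i:\mathcal{S}\to\{0,\dots,m-1\}$, $i\in\{0,\dots,m-1\}$; $|F|=m$. $f_i^{\ast}(\lambda)=\lambda$, $f_i^{\ast}(\pmb{x})=f_i(x_1)f^{\ast}_{\tau_i(x_1)}(\mathrm{suff}(\pmb{x}))$. $\mathcal{S}_{F,i}(\pmb{b})=\{s:f_i(s)=\pmb{b}\}$. For integer $k\ge0$, $\pmb{b}\in\mathcal{C}^{\ast}$: $\mathcal{P}^k_{F,i}(\pmb{b})$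 is the set of $\pmb{c}\in\mathcal{C}^k$ such that some $\pmb{x}=x_1\cdots x_n\in\mathcal{S}^{+}$ has $f_i^{\ast}(\pmb{x})\succeq\pmb{b}\pmb{c}$ and $f_i(x_1)\succeq\pmb{b}$; $\bar{\mathcal{P}}^k_{F,i}(\pmb{b})$ the same with $f_i(x_1)\succ\pmb{b}$; $\mathcal{P}^k_{F,i}=\mathcal{P}^k_{F,i}(\lambda)$, $\bar{\mathcal{P}}^k_{F,i}=\bar{\mathcal{P}}^k_{F,i}(\lambda)$. $\mathscr{F}_{\mathrm{AIFV}}$ is the set of code-tuples $F$ with $|F|=2$ satisfying: (i) $f_0,f_1$ injective; (ii) for all $i\in\{0,1\}$, $s$: $1\notin\bar{\mathcal{P}}^1_{F,i}(f_i(s))$ and $1\notin\bar{\mathcal{P}}^1_{F,i}(f_i(s)0)$; (iii) $f_i(s')\ne f_i(s)0$ for all $i,s,s'$; (iv) $\tau_i(s)=0$ if $\bar{\mathcal{P}}^0_{F,i}(f_i(s))=\emptyset$, and $\tau_i(s)=1$ otherwise; (v) $f_1(s)\ne\lambda$ and $f_1(s)\ne0$ for all $s$; (vi) $0\notin\bar{\mathcal{P}}^1_{F,1}(0)$; (vii) for all $i\in\{0,1\}$, $\pmb{b}\in\mathcal{C}^{\ast}$ with $|\bar{\mathcal{P}}^1_{F,i}(\pmb{b})|=1$: either $f_i(s)\pmb{c}=\pmb{b}$ for some $s\in\mathcal{S}$, $\pmb{c}\in\mathcal{C}^0\cup\mathcal{C}^1$, or $(i,\pmb{b})=(1,0)$.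 *)

theory Defs
  imports "HOL-Library.Sublist"
begin

datatype cbit = B0 | B1

text \<open>A code-tuple with m code tables is represented by a pair (f, tau) of
  maps indexed by the table number i (only i < m matter).\<close>
type_synonym 's codetuple = "(nat \<Rightarrow> 's \<Rightarrow> cbit list) \<times> (nat \<Rightarrow> 's \<Rightarrow> nat)"

fun fstar :: "'s codetuple \<Rightarrow> nat \<Rightarrow> 's list \<Rightarrow> cbit list" where
  "fstar F i [] = []"
| "fstar F i (x # xs) = fst F i x @ fstar F (snd F i x) xs"

definition Ssym :: "'s codetuple \<Rightarrow> nat \<Rightarrow> cbit list \<Rightarrow> 's set" where
  "Ssym F i b = {s. fst F i s = b}"

definition Pset :: "nat \<Rightarrow> 's codetuple \<Rightarrow> nat \<Rightarrow> cbit list \<Rightarrow> cbit list set" where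
  "Pset k F i b = {c. length c = k \<and> (\<exists>x. x \<noteq> [] \<and> prefix (b @ c) (fstar F i x)
                                      \<and> prefix b (fst F i (hd x)))}"

definition Pbar :: "nat \<Rightarrow> 's codetuple \<Rightarrow> nat \<Rightarrow> cbit list \<Rightarrow> cbit list set" where
  "Pbar k F i b = {c. length c = k \<and> (\<exists>x. x \<noteq> [] \<and> prefix (b @ c) (fstar F i x)
                                      \<and> strict_prefix b (fst F i (hd x)))}"

definition AIFV :: "'s codetuple set" where
  "AIFV = {F. let f = fst F; \<tau> = snd F in
      (\<forall>i\<in>{0,1}. inj (f i))
    \<and> (\<forall>i\<in>{0,1}. \<forall>s. [B1] \<notin> Pbar 1 F i (f i s) \<and> [B1] \<notin> Pbar 1 F i (f i s @ [B0]))
    \<and> (\<forall>i\<in>{0,1}. \<forall>s s'. f i s' \<noteq> f i s @ [B0])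
    \<and> (\<forall>i\<in>{0,1}. \<forall>s. \<tau> i s = (if Pbar 0 F i (f i s) = {} then 0 else 1))
    \<and> (\<forall>s. f 1 s \<noteq> [] \<and> f 1 s \<noteq> [B0])
    \<and> [B0] \<notin> Pbar 1 F 1 [B0]
    \<and> (\<forall>i\<in>{0,1}. \<forall>b. card (Pbar 1 F i b) = 1 \<longrightarrow>
          (\<exists>s c. length c \<le> 1 \<and> f i s @ c = b) \<or> (i = 1 \<and> b = [B0]))}"

end

theory Submission
  imports Defs
begin

lemma A_inj: "F \<in> AIFV \<Longrightarrow> i \<in> {0,1} \<Longrightarrow> inj (fst F i)"
  unfolding AIFV_def Let_def by blast
lemma A_ii: "F \<in> AIFV \<Longrightarrow> i \<in> {0,1} \<Longrightarrow>
   [B1] \<notin> Pbar 1 F i (fst F i s) \<and> [B1] \<notin> Pbar 1 F i (fst F i s @ [B0])"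
  unfolding AIFV_def Let_def by blast
lemma A_iii: "F \<in> AIFV \<Longrightarrow> i \<in> {0,1} \<Longrightarrow> fst F i s' \<noteq> fst F i s @ [B0]"
  unfolding AIFV_def Let_def by blast
lemma A_iv: "F \<in> AIFV \<Longrightarrow> i \<in> {0,1} \<Longrightarrow>
   snd F i s = (if Pbar 0 F i (fst F i s) = {} then 0 else 1)"
  unfolding AIFV_def Let_def by blast
lemma A_v: "F \<in> AIFV \<Longrightarrow> fst F 1 s \<noteq> []"
  unfolding AIFV_def Let_def by blast
lemma A_vii: "F \<in> AIFV \<Longrightarrow> i \<in> {0,1} \<Longrightarrow> card (Pbar 1 F i b) = 1 \<Longrightarrow>
   (\<exists>s c. length c \<le> 1 \<and> fst F i s @ c = b) \<or> (i = 1 \<and> b = [B0])"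
  unfolding AIFV_def Let_def by blast

lemma sp_app: "zs \<noteq> [] \<Longrightarrow> strict_prefix xs (xs @ zs)"
  unfolding strict_prefix_def prefix_def by auto

lemma sp_nil: "ys \<noteq> [] \<Longrightarrow> strict_prefix [] ys"
  by (cases ys) auto

lemma Pbar_sub_Pset: "Pbar k F i b \<subseteq> Pset k F i b"
  unfolding Pbar_def Pset_def by (auto simp: strict_prefix_def)

lemma len1_sub: "{c :: cbit list. length c = 1 \<and> P c} \<subseteq> {[B0],[B1]}"
proof
  fix c :: "cbit list" assume "c \<in> {c. length c = 1 \<and> P c}"
  then obtain a where "c = [a]" by (auto simp: length_Suc_conv)
  then show "c \<in> {[B0],[B1]}" by (cases a) auto
qed

lemma Pbar1_sub: "Pbar 1 F i b \<subseteq> {[B0],[B1]}"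
  unfolding Pbar_def by (rule len1_sub)
lemma Pset1_sub: "Pset 1 F i b \<subseteq> {[B0],[B1]}"
  unfolding Pset_def by (rule len1_sub)

lemma full_lemma: "A \<subseteq> {[B0],[B1]} \<Longrightarrow> A \<noteq> {} \<Longrightarrow> card A \<noteq> 1 \<Longrightarrow> A = {[B0],[B1]}"
proof -
  assume a: "A \<subseteq> {[B0],[B1]}" "A \<noteq> {}" "card A \<noteq> 1"
  have "A = {[B0]} \<or> A = {[B1]} \<or> A = {[B0],[B1]}" using a(1,2) by blast
  then show ?thesis using a(3) by auto
qed

lemma L1: "c \<in> Pset 1 F (snd F i s) [] \<Longrightarrow> c \<in> Pset 1 F i (fst F i s)"
  unfolding Pset_def
proof (clarsimp)
  fix x assume "length c = Suc 0" "x \<noteq> []" "prefix c (fstar F (snd F i s) x)"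
  then show "\<exists>x. x \<noteq> [] \<and> prefix (fst F i s @ c) (fstar F i x) \<and> prefix (fst F i s) (fst F i (hd x))"
    by (intro exI[of _ "s # x"]) auto
qed

lemma L2: "strict_prefix b (fst F i s) \<Longrightarrow> [fst F i s ! length b] \<in> Pbar 1 F i b"
  unfolding Pbar_def
proof (clarsimp)
  assume "strict_prefix b (fst F i s)"
  then obtain d where d: "fst F i s = b @ d" "d \<noteq> []"
    by (metis append_Nil2 prefix_def strict_prefix_def)
  then obtain a e where "d = a # e" by (cases d) auto
  with d show "\<exists>x. x \<noteq> [] \<and> prefix (b @ [fst F i s ! length b]) (fstar F i x) \<and> strict_prefix b (fst F i (hd x))"
    by (intro exI[of _ "[s]"]) (auto simp: nth_append strict_prefix_def)
qed

lemma L3: "c \<in> Pbar k F i b \<Longrightarrow> \<exists>s d rest. fst F i s = b @ d \<and> d \<noteq> [] \<and> prefix c (d @ rest) \<and> length c = k"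
proof -
  assume "c \<in> Pbar k F i b"
  then obtain x where h: "length c = k" "x \<noteq> []" "prefix (b @ c) (fstar F i x)" "strict_prefix b (fst F i (hd x))"
    unfolding Pbar_def by blast
  obtain s xs where x: "x = s # xs" using h(2) by (cases x) auto
  from h(4) x obtain d where d: "fst F i s = b @ d" "d \<noteq> []"
    by (metis append_Nil2 prefix_def strict_prefix_def list.sel(1))
  have "prefix (b @ c) (b @ (d @ fstar F (snd F i s) xs))" using h(3) x d by simp
  then have "prefix c (d @ fstar F (snd F i s) xs)" by simp
  with d h(1) show ?thesis by blast
qed

lemma core:
  assumes F: "F \<in> AIFV" and i: "i \<in> {0,1}" and sp: "strict_prefix (fst F i s) (fst F i t)"
  shows "\<exists>e. fst F i t = fst F i s @ B0 # B0 # e"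
proof -
  from sp obtain d where d: "fst F i t = fst F i s @ d" "d \<noteq> []"
    by (metis append_Nil2 prefix_def strict_prefix_def)
  then obtain a e where ae: "d = a # e" by (cases d) auto
  have "[fst F i t ! length (fst F i s)] \<in> Pbar 1 F i (fst F i s)" using L2[OF sp] .
  then have "[a] \<in> Pbar 1 F i (fst F i s)" using d ae by (simp add: nth_append)
  with A_ii[OF F i, of s] have a: "a = B0" by (cases a) auto
  have "e \<noteq> []" using A_iii[OF F i, of t s] d ae a by auto
  then obtain a2 e2 where e: "e = a2 # e2" by (cases e) auto
  have sp2: "strict_prefix (fst F i s @ [B0]) (fst F i t)" using d ae a e
    by (simp add: strict_prefix_def)
  have "[fst F i t ! length (fst F i s @ [B0])] \<in> Pbar 1 F i (fst F i s @ [B0])" using L2[OF sp2] .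
  then have "[a2] \<in> Pbar 1 F i (fst F i s @ [B0])" using d ae a e by (simp add: nth_append)
  with A_ii[OF F i, of s] have "a2 = B0" by (cases a2) auto
  then show ?thesis using d ae a e by auto
qed

lemma Pbar_nonempty_full:
  assumes F: "F \<in> AIFV" and i: "i \<in> {0,1}" and ne: "\<forall>s. fst F i s \<noteq> []"
    and ex: "\<exists>s. strict_prefix b (fst F i s)"
    and nob: "\<not> (\<exists>s c. length c \<le> 1 \<and> fst F i s @ c = b)" and nb: "\<not> (i = 1 \<and> b = [B0])"
  shows "Pbar 1 F i b = {[B0],[B1]}"
proof (rule full_lemma[OF Pbar1_sub])
  from ex obtain s where "strict_prefix b (fst F i s)" by blast
  from L2[OF this] show "Pbar 1 F i b \<noteq> {}" by blast
  show "card (Pbar 1 F i b) \<noteq> 1" using A_vii[OF F i, of b] nob nb by blast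
qed

lemma two_elems: assumes "card (UNIV :: ('s::finite) set) \<ge> 2" shows "\<exists>a b :: 's. a \<noteq> b"
proof (rule ccontr)
  assume "\<not> ?thesis"
  then have "UNIV = {undefined :: 's}" by auto
  then show False using assms by (metis card.empty card_insert_disjoint empty_iff finite.emptyI numeral_le_one_iff semiring_norm(69) One_nat_def)
qed

theorem lemma30:
  fixes F :: "('s::finite) codetuple"
  assumes "card (UNIV :: 's set) \<ge> 2"
    and "F \<in> AIFV"
  shows "(Pset 1 F 0 [] = {[B0], [B1]} \<and> Pset 1 F 1 [] = {[B0], [B1]})
       \<and> (\<forall>i\<in>{0, 1}. \<forall>b. Ssym F i [] = {} \<and> (i, b) \<noteq> (1, B0)
              \<longrightarrow> Pset 1 F i [b] = {[B0], [B1]})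
       \<and> (\<forall>i\<in>{0, 1}. \<forall>s. Pbar 0 F i (fst F i s) \<noteq> {}
              \<longrightarrow> Pbar 2 F i (fst F i s) = {[B0, B0]})"
proof -
  note F = assms(2)
  obtain a b :: 's where ab: "a \<noteq> b" using two_elems[OF assms(1)] by blast
  have Pbar_e: "Pbar 1 F i [] = {[B0],[B1]}" if i: "i \<in> {0,1}" and ne: "\<forall>s. fst F i s \<noteq> []" for i
  proof (rule Pbar_nonempty_full[OF F i ne])
    show "\<exists>s. strict_prefix [] (fst F i s)" using ne[rule_format, of a] by (intro exI[of _ a] sp_nil)
    show "\<not> (\<exists>s c. length c \<le> 1 \<and> fst F i s @ c = [])" using ne by simp
  qed simp
  have P1: "Pset 1 F 1 [] = {[B0],[B1]}"
    using Pbar_e[of 1] A_v[OF F] Pbar_sub_Pset[of 1 F 1 "[]"] Pset1_sub[of F 1 "[]"] by auto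
  have P0: "Pset 1 F 0 [] = {[B0],[B1]}"
  proof (cases "\<exists>s. fst F 0 s = []")
    case True
    then obtain s where s: "fst F 0 s = []" by blast
    have "fst F 0 a \<noteq> fst F 0 b" using A_inj[OF F, of 0] ab unfolding inj_def by blast
    then have "\<exists>t. fst F 0 t \<noteq> []" 
      by (cases "fst F 0 a = []") (intro exI[of _ b], simp, intro exI[of _ a], simp)
    then obtain t where t: "fst F 0 t \<noteq> []" by blast
    have "[] \<in> Pbar 0 F 0 []" unfolding Pbar_def
      using t by (intro CollectI conjI exI[of _ "[t]"]) (auto intro: sp_nil)
    then have "snd F 0 s = 1" using A_iv[OF F, of 0 s] s by auto
    then have "Pset 1 F 1 [] \<subseteq> Pset 1 F 0 []" using L1[of _ F 0 s] s by auto
    then show ?thesis using P1 Pset1_sub[of F 0 "[]"] by auto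
  next
    case False
    then show ?thesis
      using Pbar_e[of 0] Pbar_sub_Pset[of 1 F 0 "[]"] Pset1_sub[of F 0 "[]"] by auto
  qed
  have Pgen: "Pset 1 F i (fst F i s) = {[B0],[B1]}" if i: "i \<in> {0,1}" for i s
  proof -
    have "snd F i s \<in> {0,1}" using A_iv[OF F i, of s] by auto
    then have "snd F i s = 0 \<or> snd F i s = 1" by simp
    then have E: "Pset 1 F (snd F i s) [] = {[B0],[B1]}"
    proof
      assume "snd F i s = 0" then show ?thesis using P0 by simp
    next
      assume "snd F i s = 1" then show ?thesis using P1 by simp
    qed
    have "[B0] \<in> Pset 1 F i (fst F i s)" using E by (intro L1) blast
    moreover have "[B1] \<in> Pset 1 F i (fst F i s)" using E by (intro L1) blast
    ultimately show ?thesis using Pset1_sub[of F i "fst F i s"] by blast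
  qed
  have part2: "Pset 1 F i [c] = {[B0], [B1]}"
    if i: "i \<in> {0,1}" and S: "Ssym F i [] = {}" and nc: "(i, c) \<noteq> (1, B0)" for i c
  proof (cases "\<exists>s. fst F i s = [c]")
    case True
    then obtain s where "fst F i s = [c]" by blast
    with Pgen[OF i, of s] show ?thesis by simp
  next
    case False
    have ne: "\<forall>s. fst F i s \<noteq> []" using S unfolding Ssym_def by auto
    have "[c] \<in> Pbar 1 F i []" using Pbar_e[OF i ne] by (cases c) auto
    from L3[OF this] obtain s d rest where sd: "fst F i s = d" "d \<noteq> []" "prefix [c] (d @ rest)"
      by auto
    then obtain e where "d = c # e" by (cases d) auto
    with sd False have "fst F i s = [c] @ e" "e \<noteq> []" by auto
    then have spc: "strict_prefix [c] (fst F i s)" using sp_app by metis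
    have "Pbar 1 F i [c] = {[B0],[B1]}"
    proof (intro Pbar_nonempty_full[OF F i ne])
      show "\<not> (\<exists>s ca. length ca \<le> 1 \<and> fst F i s @ ca = [c])"
      proof
        assume "\<exists>s ca. length ca \<le> 1 \<and> fst F i s @ ca = [c]"
        then obtain s' ca where "length ca \<le> 1" "fst F i s' @ ca = [c]" by blast
        then show False using ne False by (cases ca; cases "fst F i s'") auto
      qed
      show "\<not> (i = 1 \<and> [c] = [B0])" using nc by auto
      show "\<exists>s. strict_prefix [c] (fst F i s)" using spc by (rule exI)
    qed
    then show ?thesis using Pbar_sub_Pset[of 1 F i "[c]"] Pset1_sub[of F i "[c]"] by auto
  qed
  have part3: "Pbar 2 F i (fst F i s) = {[B0, B0]}"
    if i: "i \<in> {0,1}" and ne: "Pbar 0 F i (fst F i s) \<noteq> {}" for i s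
  proof
    show "Pbar 2 F i (fst F i s) \<subseteq> {[B0, B0]}"
    proof
      fix c assume "c \<in> Pbar 2 F i (fst F i s)"
      from L3[OF this] obtain t d rest where td: "fst F i t = fst F i s @ d" "d \<noteq> []"
        "prefix c (d @ rest)" "length c = 2" by blast
      have "strict_prefix (fst F i s) (fst F i t)" using td sp_app by metis
      from core[OF F i this] obtain e where "fst F i t = fst F i s @ B0 # B0 # e" by blast
      with td have "d = B0 # B0 # e" by simp
      moreover obtain x y where c: "c = [x,y]" using td(4)
        by (metis One_nat_def Suc_1 length_0_conv length_Suc_conv)
      ultimately show "c \<in> {[B0,B0]}" using td(3) by simp
    qed
  next
    from ne obtain c where "c \<in> Pbar 0 F i (fst F i s)" by blast
    from L3[OF this] obtain t d rest where td: "fst F i t = fst F i s @ d" "d \<noteq> []" by blast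
    have "strict_prefix (fst F i s) (fst F i t)" using td sp_app by metis
    from core[OF F i this] obtain e where e: "fst F i t = fst F i s @ B0 # B0 # e" by blast
    have "prefix (fst F i s @ [B0, B0]) (fstar F i [t])" using e by simp
    moreover have "strict_prefix (fst F i s) (fst F i (hd [t]))"
      using e sp_app[of "B0 # B0 # e" "fst F i s"] by simp
    ultimately have "[B0, B0] \<in> Pbar 2 F i (fst F i s)" unfolding Pbar_def
      by (intro CollectI conjI exI[of _ "[t]"]) simp_all
    then show "{[B0, B0]} \<subseteq> Pbar 2 F i (fst F i s)" by simp
  qed
  have A2: "\<forall>i\<in>{0, 1}. \<forall>b. Ssym F i [] = {} \<and> (i, b) \<noteq> (1, B0)
              \<longrightarrow> Pset 1 F i [b] = {[B0], [B1]}"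
  proof (intro ballI allI impI)
    fix i c assume i: "i \<in> {0::nat,1}" and h: "Ssym F i [] = {} \<and> (i, c) \<noteq> (1, B0)"
    from h have h1: "Ssym F i [] = {}" and h2: "(i, c) \<noteq> (1, B0)" by auto
    show "Pset 1 F i [c] = {[B0], [B1]}" using part2[OF i h1 h2] .
  qed
  have A3: "\<forall>i\<in>{0, 1}. \<forall>s. Pbar 0 F i (fst F i s) \<noteq> {}
              \<longrightarrow> Pbar 2 F i (fst F i s) = {[B0, B0]}"
  proof (intro ballI allI impI)
    fix i s assume i: "i \<in> {0::nat,1}" and h: "Pbar 0 F i (fst F i s) \<noteq> {}"
    show "Pbar 2 F i (fst F i s) = {[B0, B0]}" using part3[OF i h] .
  qed
  from P0 P1 A2 A3 show ?thesis by (intro conjI)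
qed

end
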